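(* Let $d$ be a tree degree sequence with $n(d)\geq 3$. Then $$\nu^{\mathcal T}_{\max}(d)=\min\left\{ \left\lfloor \frac{n(d)}{2}\right\rfloor,\; n(d)-n_1(d)\right\}.$$
   Context: All graphs are finite, simple and undirected. The degree sequence of a graph is the nonincreasing sequence of its vertex degrees. A tree degree sequence is the degree sequence of some tree. For a finite sequence $d$ of integers, $n(d)$ is the number of its elements and $n_i(d)$ is the number of its elements equal to $i$. $\nu(G)$ denotes the matching number of $G$. For a tree degree sequence $d$, $\nu^{\mathcal T}_{\max}(d)=\max\{\nu(T): T \text{ a tree with degree sequence } d\}$. *)

theory Defs
  imports Main
begin

definition simple_graph :: "nat set \<Rightarrow> nat set set \<Rightarrow> bool" where
  "simple_graph V E \<longleftrightarrow> finite V \<and> (\<forall>e\<in>E. \<exists>u v. e = {u, v} \<and> u \<noteq> v \<and> u \<in> V \<and> v \<in> V)"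

definition adj :: "nat set set \<Rightarrow> nat \<Rightarrow> nat \<Rightarrow> bool" where
  "adj E u v \<longleftrightarrow> {u, v} \<in> E"

definition degree :: "nat set set \<Rightarrow> nat \<Rightarrow> nat" where
  "degree E v = card {e \<in> E. v \<in> e}"

fun is_walk :: "nat set set \<Rightarrow> nat list \<Rightarrow> bool" where
  "is_walk E [] = False"
| "is_walk E [v] = True"
| "is_walk E (u # v # vs) = (adj E u v \<and> is_walk E (v # vs))"

definition connected :: "nat set \<Rightarrow> nat set set \<Rightarrow> bool" where
  "connected V E \<longleftrightarrow> (\<forall>u\<in>V. \<forall>v\<in>V. \<exists>p. is_walk E p \<and> hd p = u \<and> last p = v)"

definition is_cycle :: "nat set set \<Rightarrow> nat list \<Rightarrow> bool" where
  "is_cycle E c \<longleftrightarrow> length c \<ge> 3 \<and> distinct c \<and> is_walk E c \<and> adj E (last c) (hd c)"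

definition acyclic_graph :: "nat set set \<Rightarrow> bool" where
  "acyclic_graph E \<longleftrightarrow> (\<nexists>c. is_cycle E c)"

definition is_tree :: "nat set \<Rightarrow> nat set set \<Rightarrow> bool" where
  "is_tree V E \<longleftrightarrow> simple_graph V E \<and> V \<noteq> {} \<and> connected V E \<and> acyclic_graph E"

definition degree_sequence :: "nat set \<Rightarrow> nat set set \<Rightarrow> nat list" where
  "degree_sequence V E = rev (sort (map (degree E) (sorted_list_of_set V)))"

definition tree_degree_sequence :: "nat list \<Rightarrow> bool" where
  "tree_degree_sequence d \<longleftrightarrow> (\<exists>V E. is_tree V E \<and> degree_sequence V E = d)"

definition is_matching :: "nat set set \<Rightarrow> nat set set \<Rightarrow> bool" where
  "is_matching E M \<longleftrightarrow> M \<subseteq> E \<and> (\<forall>e\<in>M. \<forall>f\<in>M. e \<noteq> f \<longrightarrow> e \<inter> f = {})"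

definition matching_number :: "nat set set \<Rightarrow> nat" where
  "matching_number E = Max {card M | M. is_matching E M}"

definition nu_T_max :: "nat list \<Rightarrow> nat" where
  "nu_T_max d = Max {matching_number E | V E. is_tree V E \<and> degree_sequence V E = d}"

end

theory Submission
  imports Defs "HOL-Library.Multiset"
begin


lemma adj_sym: "adj E a b = adj E b a"
  by (simp add: adj_def insert_commute)

lemma walk_nonempty: "is_walk E p \<Longrightarrow> p \<noteq> []"
  by (cases p) auto

lemma walk_Cons: "is_walk E (a # p) \<longleftrightarrow> (p = [] \<or> (adj E a (hd p) \<and> is_walk E p))"
  by (cases p) auto

lemma walk_append:
  "xs \<noteq> [] \<Longrightarrow> ys \<noteq> [] \<Longrightarrow>
   is_walk E (xs @ ys) \<longleftrightarrow> is_walk E xs \<and> is_walk E ys \<and> adj E (last xs) (hd ys)"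
proof (induction xs)
  case Nil then show ?case by simp
next
  case (Cons a xs)
  show ?case
  proof (cases "xs = []")
    case True
    then show ?thesis using Cons.prems by (cases ys) auto
  next
    case False
    then obtain b xs' where xs: "xs = b # xs'" by (cases xs) auto
    then show ?thesis using Cons.IH[OF False Cons.prems(2)] by simp
  qed
qed

lemma walk_mono: "is_walk E p \<Longrightarrow> E \<subseteq> E' \<Longrightarrow> is_walk E' p"
  by (induction E p rule: is_walk.induct) (auto simp: adj_def)

lemma walk_nth: "is_walk E p \<Longrightarrow> Suc i < length p \<Longrightarrow> adj E (p!i) (p!Suc i)"
proof (induction E p arbitrary: i rule: is_walk.induct)
  case (3 E u v vs)
  then show ?case by (cases i) auto
qed auto

lemma walk_drop: "is_walk E p \<Longrightarrow> i < length p \<Longrightarrow> is_walk E (drop i p)"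
proof (induction E p arbitrary: i rule: is_walk.induct)
  case (3 E u v vs)
  then show ?case by (cases i) auto
qed auto

lemma walk_restrict:
  "is_walk (insert e E) p \<Longrightarrow> (\<forall>a\<in>set p. \<forall>b\<in>set p. {a,b} \<noteq> e) \<Longrightarrow> is_walk E p"
  by (induction "insert e E" p rule: is_walk.induct) (auto simp: adj_def)

lemma sg_edge: "simple_graph V E \<Longrightarrow> e \<in> E \<Longrightarrow> \<exists>u v. e = {u,v} \<and> u \<noteq> v \<and> u \<in> V \<and> v \<in> V"
  unfolding simple_graph_def by blast

lemma sg_edge_sub: "simple_graph V E \<Longrightarrow> e \<in> E \<Longrightarrow> e \<subseteq> V"
proof -
  assume "simple_graph V E" "e \<in> E"
  then obtain u v where "e = {u,v}" "u \<in> V" "v \<in> V" using sg_edge by blast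
  then show ?thesis by simp
qed

lemma sg_finite_E: "simple_graph V E \<Longrightarrow> finite E"
proof -
  assume a: "simple_graph V E"
  then have "E \<subseteq> Pow V" using sg_edge_sub by blast
  moreover have "finite V" using a unfolding simple_graph_def by simp
  ultimately show ?thesis using finite_subset by blast
qed

lemma adj_in: "simple_graph V E \<Longrightarrow> adj E a b \<Longrightarrow> a \<in> V \<and> b \<in> V \<and> a \<noteq> b"
  unfolding adj_def simple_graph_def by (metis doubleton_eq_iff)

lemma cycle_rotate1: "is_cycle E c \<Longrightarrow> is_cycle E (rotate1 c)"
proof -
  assume c: "is_cycle E c"
  have lc: "length c \<ge> 3" using c unfolding is_cycle_def by auto
  then obtain a cs where ac: "c = a # cs" by (cases c) auto
  with lc have cs: "cs \<noteq> []" by auto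
  have w: "is_walk E (a # cs)" and ad: "adj E (last (a # cs)) a" and d: "distinct (a # cs)"
    and l: "length (a # cs) \<ge> 3"
    using c ac unfolding is_cycle_def by auto
  have "is_walk E cs" "adj E a (hd cs)" using w cs by (auto simp: walk_Cons)
  moreover have "adj E (last cs) a" using ad cs by simp
  ultimately have "is_walk E (cs @ [a])" using cs by (simp add: walk_append)
  moreover have "adj E (last (cs @ [a])) (hd (cs @ [a]))" using \<open>adj E a (hd cs)\<close> cs by simp
  ultimately show ?thesis using d l ac unfolding is_cycle_def by auto
qed

lemma cycle_rotate: "is_cycle E c \<Longrightarrow> is_cycle E (rotate n c)"
  by (induction n) (auto simp: cycle_rotate1)

lemma unique_nb:
  assumes sg: "simple_graph V E" and d1: "degree E v = 1"
  shows "\<exists>u. u \<noteq> v \<and> u \<in> V \<and> v \<in> V \<and> {v,u} \<in> E \<and> (\<forall>e\<in>E. v \<in> e \<longrightarrow> e = {v,u})"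
proof -
  from d1 obtain e0 where S: "{e\<in>E. v\<in>e} = {e0}" unfolding degree_def
    by (auto simp: card_1_singleton_iff)
  then have e0: "e0 \<in> E" "v \<in> e0" by auto
  then obtain a b where ab: "e0 = {a,b}" "a\<noteq>b" "a\<in>V" "b\<in>V" using sg_edge sg by blast
  define u where "u = (if a = v then b else a)"
  have h: "e0 = {v,u}" "u \<noteq> v" "u \<in> V" "v\<in>V" using ab e0 unfolding u_def by auto
  have "\<forall>e\<in>E. v\<in>e \<longrightarrow> e = e0"
  proof (intro ballI impI)
    fix e assume "e \<in> E" "v \<in> e"
    then have "e \<in> {e\<in>E. v\<in>e}" by simp
    then show "e = e0" using S by simp
  qed
  then have "\<forall>e\<in>E. v\<in>e \<longrightarrow> e = {v,u}" using h(1) by simp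
  moreover have "{v,u} \<in> E" using e0(1) h(1) by simp
  ultimately show ?thesis using h(2,3,4) by blast
qed

lemma adj_leaf: "\<forall>e\<in>E. v \<in> e \<longrightarrow> e = {v,u} \<Longrightarrow> u \<noteq> v \<Longrightarrow> adj E v y \<Longrightarrow> y = u"
  unfolding adj_def by (metis doubleton_eq_iff insertI1)

lemma deg_pos_of_adj: "finite E \<Longrightarrow> adj E v y \<Longrightarrow> 1 \<le> degree E v"
proof -
  assume f: "finite E" and a: "adj E v y"
  then have "{v,y} \<in> {e\<in>E. v\<in>e}" unfolding adj_def by auto
  moreover have "finite {e\<in>E. v\<in>e}" using f by auto
  ultimately show ?thesis unfolding degree_def
    by (metis One_nat_def Suc_leI card_gt_0_iff empty_iff)
qed

lemma other_vertex: "finite V \<Longrightarrow> 2 \<le> card V \<Longrightarrow> \<exists>w\<in>V. w \<noteq> v"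
proof (rule ccontr)
  assume "finite V" "2 \<le> card V" "\<not> (\<exists>w\<in>V. w \<noteq> v)"
  then have "V \<subseteq> {v}" by auto
  then have "card V \<le> card {v}" by (intro card_mono) auto
  then have "card V \<le> 1" by simp
  with \<open>2 \<le> card V\<close> show False by simp
qed

lemma tree_deg_pos:
  assumes t: "is_tree V E" and v: "v\<in>V" and c: "2 \<le> card V"
  shows "1 \<le> degree E v"
proof -
  have sg: "simple_graph V E" and cn: "connected V E" using t unfolding is_tree_def by auto
  have fV: "finite V" using sg unfolding simple_graph_def by auto
  obtain w where w: "w\<in>V" "w \<noteq> v" using other_vertex[OF fV c] by blast
  obtain p where p: "is_walk E p" "hd p = v" "last p = w" using cn v w unfolding connected_def by blast
  obtain q where pq: "p = v # q" using p walk_nonempty by (cases p) auto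
  have "q \<noteq> []" using pq p w by auto
  then have "adj E v (hd q)" using p pq by (simp add: walk_Cons)
  then show ?thesis using deg_pos_of_adj sg_finite_E[OF sg] by blast
qed

lemma walk_in_pair:
  "is_walk E p \<Longrightarrow> (\<forall>y. adj E a y \<longrightarrow> y = b) \<Longrightarrow> (\<forall>y. adj E b y \<longrightarrow> y = a) \<Longrightarrow> hd p \<in> {a,b} \<Longrightarrow> set p \<subseteq> {a,b}"
  by (induction E p rule: is_walk.induct) auto

lemma tree_no_leaf_edge:
  assumes t: "is_tree V E" and c: "3 \<le> card V" and e: "{a,b} \<in> E"
    and da: "degree E a = 1" and db: "degree E b = 1"
  shows False
proof -
  have sg: "simple_graph V E" and cn: "connected V E" using t unfolding is_tree_def by auto
  have fV: "finite V" using sg unfolding simple_graph_def by auto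
  obtain x y where xy: "{a,b} = {x,y}" "x\<noteq>y" "x\<in>V" "y\<in>V" using sg_edge[OF sg e] by blast
  then have ab: "a \<noteq> b" "a \<in> V" "b \<in> V" by (auto simp: doubleton_eq_iff)
  obtain u where u: "u \<noteq> a" "\<forall>e\<in>E. a \<in> e \<longrightarrow> e = {a,u}" using unique_nb[OF sg da] by blast
  then have "{a,b} = {a,u}" using e by auto
  then have "u = b" using ab u by (auto simp: doubleton_eq_iff)
  then have A: "\<forall>y. adj E a y \<longrightarrow> y = b" using adj_leaf u by blast
  obtain u' where u': "u' \<noteq> b" "\<forall>e\<in>E. b \<in> e \<longrightarrow> e = {b,u'}" using unique_nb[OF sg db] by blast
  then have "{a,b} = {b,u'}" using e by auto
  then have "u' = a" using ab u' by (auto simp: doubleton_eq_iff)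
  then have B: "\<forall>y. adj E b y \<longrightarrow> y = a" using adj_leaf u' by blast
  have "\<not> V \<subseteq> {a,b}"
  proof
    assume "V \<subseteq> {a,b}"
    then have "card V \<le> card {a,b}" by (simp add: card_mono)
    also have "\<dots> \<le> 2" by (simp add: card_insert_le_m1)
    finally show False using c by simp
  qed
  then obtain w where w: "w \<in> V" "w \<notin> {a,b}" by blast
  obtain p where p: "is_walk E p" "hd p = a" "last p = w" using cn ab w unfolding connected_def by blast
  have "set p \<subseteq> {a,b}" using walk_in_pair[OF p(1) A B] p by auto
  moreover have "w \<in> set p" using p walk_nonempty by (metis last_in_set)
  ultimately show False using w by auto
qed

lemma tree_has_leaf:
  assumes t: "is_tree V E" and c: "2 \<le> card V"
  shows "\<exists>v\<in>V. degree E v = 1"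
proof -
  have sg: "simple_graph V E" and cn: "connected V E" and ac: "acyclic_graph E"
    using t unfolding is_tree_def by auto
  have fV: "finite V" using sg unfolding simple_graph_def by auto
  have fE: "finite E" using sg_finite_E[OF sg] .
  define P where "P = (\<lambda>p. distinct p \<and> is_walk E p \<and> set p \<subseteq> V)"
  obtain v0 where v0: "v0 \<in> V" using c fV by (metis card.empty equals0I not_numeral_le_zero)
  obtain w where w: "w\<in>V" "w \<noteq> v0" using other_vertex[OF fV c] by blast
  obtain p0 where p0: "is_walk E p0" "hd p0 = v0" "last p0 = w" using cn v0 w unfolding connected_def by blast
  obtain q0 where pq0: "p0 = v0 # q0" using p0 walk_nonempty by (cases p0) auto
  have "q0 \<noteq> []" using pq0 p0 w by auto
  then have a0: "adj E v0 (hd q0)" using p0 pq0 by (simp add: walk_Cons)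
  then have a0': "hd q0 \<in> V" "v0 \<noteq> hd q0" using adj_in[OF sg] by auto
  have P0: "P [v0, hd q0]" unfolding P_def using a0 a0' v0 by simp
  have bnd: "\<forall>p. P p \<longrightarrow> length p < Suc (card V)"
  proof (intro allI impI)
    fix p assume "P p"
    then have d: "distinct p" and s: "set p \<subseteq> V" unfolding P_def by simp_all
    have "length p = card (set p)" using distinct_card[OF d] by simp
    also have "\<dots> \<le> card V" using card_mono[OF fV s] .
    finally show "length p < Suc (card V)" by simp
  qed
  obtain p where Pp: "P p" and pmax: "\<forall>q. P q \<longrightarrow> length q \<le> length p"
    using ex_has_greatest_nat[of P "[v0, hd q0]" length "Suc (card V)"] P0 bnd by blast
  have lp: "length p \<ge> 2" using pmax P0 by fastforce
  have dp: "distinct p" and wp: "is_walk E p" and sp: "set p \<subseteq> V" using Pp unfolding P_def by auto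
  define z where "z = last p"
  define q where "q = p ! (length p - 2)"
  have pne: "p \<noteq> []" using lp by auto
  have zn: "z = p ! (length p - 1)" unfolding z_def using pne by (simp add: last_conv_nth)
  have aqz: "adj E q z" unfolding q_def zn using walk_nth[OF wp, of "length p - 2"] lp
    by (simp add: Suc_diff_Suc numeral_2_eq_2)
  have zV: "z \<in> V" unfolding z_def using sp pne by auto
  have "1 \<le> degree E z" using tree_deg_pos[OF t zV c] .
  moreover have "\<not> 2 \<le> degree E z"
  proof
    assume d2: "2 \<le> degree E z"
    have "\<exists>e. e \<in> E \<and> z \<in> e \<and> e \<noteq> {q,z}"
    proof (rule ccontr)
      assume "\<not> ?thesis"
      then have "{e\<in>E. z\<in>e} \<subseteq> {{q,z}}" by blast
      then have "card {e\<in>E. z\<in>e} \<le> card {{q,z}}" by (intro card_mono) auto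
      then show False using d2 unfolding degree_def by simp
    qed
    then obtain e where e: "e \<in> E" "z \<in> e" "e \<noteq> {q,z}" by blast
    obtain a b where ab: "e = {a,b}" "a \<noteq> b" "a \<in> V" "b \<in> V" using sg_edge[OF sg e(1)] by blast
    define y where "y = (if a = z then b else a)"
    have ey: "e = {z,y}" "y \<noteq> z" "y \<in> V" using ab e(2) unfolding y_def by auto
    have yq: "y \<noteq> q" using e(3) ey(1) by (auto simp: insert_commute)
    have azy: "adj E z y" using e(1) ey(1) unfolding adj_def by simp
    show False
    proof (cases "y \<in> set p")
      case False
      have "P (p @ [y])" unfolding P_def using dp wp sp False ey(3) azy walk_nonempty[OF wp]
        by (simp add: walk_append z_def)
      then show False using pmax by fastforce
    next
      case True
      then obtain i where i: "i < length p" "p ! i = y" by (metis in_set_conv_nth)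
      have "i \<noteq> length p - 1" using i ey(2) zn by auto
      moreover have "i \<noteq> length p - 2" using i yq unfolding q_def by auto
      ultimately have i3: "i + 3 \<le> length p" using i(1) lp by linarith
      have "is_cycle E (drop i p)" unfolding is_cycle_def
      proof (intro conjI)
        show "3 \<le> length (drop i p)" using i3 by simp
        show "distinct (drop i p)" using dp by simp
        show "is_walk E (drop i p)" using walk_drop[OF wp i(1)] .
        have "hd (drop i p) = y" using i by (simp add: hd_drop_conv_nth)
        moreover have "last (drop i p) = z" using i(1) unfolding z_def by simp
        ultimately show "adj E (last (drop i p)) (hd (drop i p))" using azy by simp
      qed
      then show False using ac unfolding acyclic_graph_def by blast
    qed
  qed
  ultimately show ?thesis using zV by (intro bexI[of _ z]) auto
qed

lemma walk_avoid:
  assumes L: "\<forall>e\<in>E. v \<in> e \<longrightarrow> e = {v,u}" and uv: "u \<noteq> v"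
  shows "is_walk E p \<Longrightarrow> hd p \<noteq> v \<Longrightarrow> last p \<noteq> v \<Longrightarrow>
    \<exists>q. is_walk (E - {{v,u}}) q \<and> hd q = hd p \<and> last q = last p"
proof (induction p rule: length_induct)
  case (1 p)
  show ?case
  proof (cases p)
    case Nil then show ?thesis using "1.prems" by simp
  next
    case (Cons a r)
    show ?thesis
    proof (cases r)
      case Nil
      then show ?thesis using Cons by (intro exI[of _ "[a]"]) simp
    next
      case (Cons b r')
      have pa: "p = a # b # r'" using \<open>p = a # r\<close> Cons by simp
      have av: "a \<noteq> v" using "1.prems" pa by simp
      have ab: "adj E a b" and wb: "is_walk E (b # r')" using "1.prems"(1) pa by auto
      show ?thesis
      proof (cases "b = v")
        case False
        obtain q where q: "is_walk (E - {{v,u}}) q" "hd q = b" "last q = last (b # r')"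
          using "1.IH"[rule_format, of "b # r'"] pa wb False "1.prems"(3) by auto
        have "{a,b} \<noteq> {v,u}" using av False by (auto simp: doubleton_eq_iff)
        then have "adj (E - {{v,u}}) a (hd q)" using ab q(2) unfolding adj_def by simp
        then have "is_walk (E - {{v,u}}) (a # q)" using q(1) by (simp add: walk_Cons)
        moreover have "last (a # q) = last p" using q walk_nonempty[OF q(1)] pa by simp
        ultimately show ?thesis using pa by (intro exI[of _ "a # q"]) simp
      next
        case True
        have "{a,v} \<in> E" using ab True unfolding adj_def by simp
        then have "{a,v} = {v,u}" using L by auto
        then have au: "a = u" using av by (auto simp: doubleton_eq_iff)
        have "r' \<noteq> []" using "1.prems"(3) pa True by auto
        then obtain c r'' where r': "r' = c # r''" by (cases r') auto
        have "adj E v c" using wb True r' by simp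
        then have "{v,c} \<in> E" unfolding adj_def .
        then have "{v,c} = {v,u}" using L by auto
        then have cu: "c = u" using uv by (auto simp: doubleton_eq_iff)
        have wc: "is_walk E (c # r'')" using wb r' by simp
        obtain q where q: "is_walk (E - {{v,u}}) q" "hd q = c" "last q = last (c # r'')"
          using "1.IH"[rule_format, of "c # r''"] pa r' wc cu uv "1.prems"(3) by auto
        show ?thesis using q pa r' au cu by (intro exI[of _ q]) simp
      qed
    qed
  qed
qed

lemma tree_remove_leaf:
  assumes t: "is_tree V E" and vV: "v \<in> V" and d1: "degree E v = 1" and c: "2 \<le> card V"
  shows "\<exists>u. {v,u} \<in> E \<and> is_tree (V - {v}) (E - {{v,u}})"
proof -
  have sg: "simple_graph V E" and cn: "connected V E" and ac: "acyclic_graph E"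
    using t unfolding is_tree_def by auto
  obtain u where u: "u \<noteq> v" "u \<in> V" "{v,u} \<in> E" and L: "\<forall>e\<in>E. v \<in> e \<longrightarrow> e = {v,u}"
    using unique_nb[OF sg d1] by blast
  have sg': "simple_graph (V - {v}) (E - {{v,u}})"
    unfolding simple_graph_def
  proof (intro conjI ballI)
    show "finite (V - {v})" using sg unfolding simple_graph_def by simp
    fix e assume e: "e \<in> E - {{v,u}}"
    then obtain a b where ab: "e = {a,b}" "a \<noteq> b" "a \<in> V" "b \<in> V" using sg_edge[OF sg] by blast
    have "v \<notin> e" using e L by auto
    then show "\<exists>a b. e = {a, b} \<and> a \<noteq> b \<and> a \<in> V - {v} \<and> b \<in> V - {v}" using ab by auto
  qed
  have cn': "connected (V - {v}) (E - {{v,u}})"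
    unfolding connected_def
  proof (intro ballI)
    fix a b assume a: "a \<in> V - {v}" and b: "b \<in> V - {v}"
    obtain p where p: "is_walk E p" "hd p = a" "last p = b" using cn a b unfolding connected_def by blast
    show "\<exists>p. is_walk (E - {{v, u}}) p \<and> hd p = a \<and> last p = b"
      using walk_avoid[OF L u(1) p(1)] p a b by auto
  qed
  have ac': "acyclic_graph (E - {{v,u}})"
    unfolding acyclic_graph_def
  proof
    assume "\<exists>c. is_cycle (E - {{v,u}}) c"
    then obtain c where "is_cycle (E - {{v,u}}) c" by blast
    then have "is_cycle E c" unfolding is_cycle_def adj_def using walk_mono[of "E - {{v,u}}" c E] by auto
    then show False using ac unfolding acyclic_graph_def by blast
  qed
  have "V - {v} \<noteq> {}" using u by auto
  then show ?thesis using sg' cn' ac' u(3) unfolding is_tree_def by blast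
qed

lemma tree_card: "is_tree V E \<Longrightarrow> card E + 1 = card V"
proof (induction "card V" arbitrary: V E)
  case 0
  then have "finite V" "V \<noteq> {}" unfolding is_tree_def simple_graph_def by auto
  then show ?case using 0 by simp
next
  case (Suc n)
  have sg: "simple_graph V E" using Suc.prems unfolding is_tree_def by simp
  have fV: "finite V" using sg unfolding simple_graph_def by simp
  show ?case
  proof (cases "n = 0")
    case True
    then have "card V = 1" using Suc.hyps by simp
    then obtain a where Va: "V = {a}" by (auto simp: card_1_singleton_iff)
    have "E = {}"
    proof (rule ccontr)
      assume "E \<noteq> {}"
      then obtain e where "e \<in> E" by blast
      then obtain x y where "x \<noteq> y" "x \<in> V" "y \<in> V" using sg_edge[OF sg] by blast
      then show False using Va by simp
    qed
    then show ?thesis using \<open>card V = 1\<close> by simp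
  next
    case False
    then have c2: "2 \<le> card V" using Suc.hyps by simp
    obtain v where v: "v \<in> V" "degree E v = 1" using tree_has_leaf[OF Suc.prems c2] by blast
    obtain u where u: "{v,u} \<in> E" "is_tree (V - {v}) (E - {{v,u}})"
      using tree_remove_leaf[OF Suc.prems v c2] by blast
    have "card (V - {v}) = n" using Suc.hyps v fV by simp
    then have "card (E - {{v,u}}) + 1 = n" using Suc.hyps(1)[OF _ u(2)] by simp
    moreover have "card (E - {{v,u}}) = card E - 1" using u(1) sg_finite_E[OF sg] by simp
    moreover have "card E \<ge> 1" using u(1) sg_finite_E[OF sg] by (metis card_0_eq empty_iff less_one not_le)
    ultimately show ?thesis using Suc.hyps(2) by simp
  qed
qed

lemma handshake:
  assumes sg: "simple_graph V E"
  shows "sum (degree E) V = 2 * card E"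
proof -
  have fV: "finite V" using sg unfolding simple_graph_def by simp
  have fE: "finite E" using sg_finite_E[OF sg] .
  have "sum (degree E) V = (\<Sum>v\<in>V. \<Sum>e\<in>E. if v \<in> e then 1 else 0)"
  proof (rule sum.cong)
    fix v assume "v \<in> V"
    have "degree E v = (\<Sum>e\<in>{e\<in>E. v\<in>e}. 1)" unfolding degree_def by simp
    also have "\<dots> = (\<Sum>e\<in>E. if v \<in> e then 1 else 0)" using sum.inter_filter[OF fE, of "\<lambda>_. 1::nat" "\<lambda>e. v \<in> e"] by simp
    finally show "degree E v = (\<Sum>e\<in>E. if v \<in> e then 1 else 0)" .
  qed simp
  also have "\<dots> = (\<Sum>e\<in>E. \<Sum>v\<in>V. if v \<in> e then 1 else 0)" by (rule sum.swap)
  also have "\<dots> = (\<Sum>e\<in>E. 2)"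
  proof (rule sum.cong)
    fix e assume e: "e \<in> E"
    obtain a b where ab: "e = {a,b}" "a \<noteq> b" "a \<in> V" "b \<in> V" using sg_edge[OF sg e] by blast
    have "(\<Sum>v\<in>V. if v \<in> e then 1 else 0) = (\<Sum>v\<in>{v\<in>V. v\<in>e}. 1::nat)"
      using sum.inter_filter[OF fV, of "\<lambda>_. 1::nat" "\<lambda>v. v \<in> e"] by simp
    also have "{v\<in>V. v\<in>e} = e" using ab by auto
    finally show "(\<Sum>v\<in>V. if v \<in> e then 1 else 0) = (2::nat)" using ab by simp
  qed simp
  finally show ?thesis by simp
qed

lemma conn_walk: "connected V E \<Longrightarrow> a \<in> V \<Longrightarrow> b \<in> V \<Longrightarrow> \<exists>p. is_walk E p \<and> hd p = a \<and> last p = b"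
  unfolding connected_def by blast

lemma attach_tree:
  assumes t: "is_tree V E" and x: "x \<in> V" and w: "w \<notin> V"
  shows "is_tree (insert w V) (insert {x,w} E)"
proof -
  have sg: "simple_graph V E" and cn: "connected V E" and ac: "acyclic_graph E"
    using t unfolding is_tree_def by auto
  let ?E = "insert {x,w} E"
  have xw: "x \<noteq> w" using x w by auto
  have sg': "simple_graph (insert w V) ?E"
    unfolding simple_graph_def
  proof (intro conjI ballI)
    show "finite (insert w V)" using sg unfolding simple_graph_def by simp
    fix e assume e: "e \<in> ?E"
    show "\<exists>a b. e = {a, b} \<and> a \<noteq> b \<and> a \<in> insert w V \<and> b \<in> insert w V"
    proof (cases "e = {x,w}")
      case True then show ?thesis using xw x by blast
    next
      case False
      then have "e \<in> E" using e by simp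
      then obtain a b where "e = {a,b}" "a \<noteq> b" "a \<in> V" "b \<in> V" using sg_edge[OF sg] by blast
      then show ?thesis by blast
    qed
  qed
  have sub: "E \<subseteq> ?E" by auto
  have axw1: "adj ?E x w" unfolding adj_def by simp
  have axw2: "adj ?E w x" unfolding adj_def insert_commute[of w x] by simp
  note axw = axw1 axw2
  have cn': "connected (insert w V) ?E"
    unfolding connected_def
  proof (intro ballI)
    fix a b assume a: "a \<in> insert w V" and b: "b \<in> insert w V"
    have walkV: "\<exists>p. is_walk ?E p \<and> hd p = a' \<and> last p = b'" if ha: "a' \<in> V" and hb: "b' \<in> V" for a' b'
    proof -
      obtain p where p: "is_walk E p" "hd p = a'" "last p = b'" using cn ha hb unfolding connected_def by blast
      have "is_walk ?E p" using walk_mono[OF p(1) sub] .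
      then show ?thesis using p(2,3) by (intro exI[of _ p]) simp
    qed
    show "\<exists>p. is_walk ?E p \<and> hd p = a \<and> last p = b"
    proof (cases "a = w")
      case aw: True
      show ?thesis
      proof (cases "b = w")
        case True then show ?thesis using aw by (intro exI[of _ "[w]"]) simp
      next
        case False
        then have "b \<in> V" using b by simp
        then obtain p where p: "is_walk ?E p" "hd p = x" "last p = b" using walkV[OF x] by blast
        have "is_walk ?E (w # p)" using p axw walk_nonempty[OF p(1)] by (simp add: walk_Cons)
        then show ?thesis using aw p walk_nonempty[OF p(1)] by (intro exI[of _ "w # p"]) simp
      qed
    next
      case anw: False
      then have aV: "a \<in> V" using a by simp
      show ?thesis
      proof (cases "b = w")
        case True
        obtain p where p: "is_walk ?E p" "hd p = a" "last p = x" using walkV[OF aV x] by blast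
        have "is_walk ?E (p @ [w])" using p axw walk_nonempty[OF p(1)] by (simp add: walk_append)
        then show ?thesis using True p walk_nonempty[OF p(1)] by (intro exI[of _ "p @ [w]"]) simp
      next
        case False
        then have "b \<in> V" using b by simp
        then show ?thesis using walkV[OF aV] by blast
      qed
    qed
  qed
  have ac': "acyclic_graph ?E"
    unfolding acyclic_graph_def
  proof
    assume "\<exists>c. is_cycle ?E c"
    then obtain c where c: "is_cycle ?E c" by blast
    show False
    proof (cases "w \<in> set c")
      case False
      have nw: "\<forall>a\<in>set c. \<forall>b\<in>set c. {a,b} \<noteq> {x,w}" using False by (auto simp: doubleton_eq_iff)
      have "is_walk E c" using walk_restrict[of "{x,w}" E c] c nw unfolding is_cycle_def by blast
      moreover have "adj E (last c) (hd c)"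
      proof -
        have "c \<noteq> []" using c unfolding is_cycle_def by auto
        then have "last c \<in> set c" "hd c \<in> set c" by auto
        then have "{last c, hd c} \<noteq> {x,w}" using nw by blast
        then show ?thesis using c unfolding is_cycle_def adj_def by simp
      qed
      ultimately have "is_cycle E c" using c unfolding is_cycle_def by simp
      then show False using ac unfolding acyclic_graph_def by blast
    next
      case True
      then obtain i where i: "i < length c" "c ! i = w" by (metis in_set_conv_nth)
      define c' where "c' = rotate i c"
      have c': "is_cycle ?E c'" unfolding c'_def using cycle_rotate[OF c] .
      have "c \<noteq> []" using i by auto
      then have hc': "hd c' = w" unfolding c'_def using i by (simp add: hd_rotate_conv_nth)
      have l3: "length c' \<ge> 3" using c' unfolding is_cycle_def by simp
      obtain a0 t where c0: "c' = a0 # t" using l3 by (cases c') auto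
      obtain y r where t: "t = y # r" using l3 c0 by (cases t) auto
      have rne: "r \<noteq> []" using l3 c0 t by auto
      have cr: "c' = w # y # r" using c0 t hc' by simp
      have dist: "distinct (w # y # r)" using c' cr unfolding is_cycle_def by simp
      have wn: "\<forall>z. adj ?E w z \<longrightarrow> z = x"
      proof (intro allI impI)
        fix z assume "adj ?E w z"
        then have "{w,z} \<in> ?E" unfolding adj_def .
        moreover have "{w,z} \<notin> E" using sg_edge_sub[OF sg] w by blast
        ultimately have "{w,z} = {x,w}" by simp
        then show "z = x" using xw by (auto simp: doubleton_eq_iff)
      qed
      have "adj ?E w y" using c' cr unfolding is_cycle_def by simp
      then have yx: "y = x" using wn by blast
      have "adj ?E (last c') w" using c' hc' unfolding is_cycle_def by simp
      then have "adj ?E (last r) w" using cr rne by simp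
      then have "adj ?E w (last r)" by (metis adj_sym)
      then have "last r = x" using wn by blast
      moreover have "last r \<in> set r" using rne by simp
      ultimately show False using dist yx by auto
    qed
  qed
  show ?thesis using sg' cn' ac' unfolding is_tree_def by blast
qed

lemma attach_deg:
  assumes sg: "simple_graph V E" and x: "x \<in> V" and w: "w \<notin> V"
  shows "degree (insert {x,w} E) w = 1"
    and "degree (insert {x,w} E) x = degree E x + 1"
    and "y \<noteq> x \<Longrightarrow> y \<noteq> w \<Longrightarrow> degree (insert {x,w} E) y = degree E y"
proof -
  have fE: "finite E" using sg_finite_E[OF sg] .
  have nw: "\<forall>e\<in>E. w \<notin> e" using sg_edge_sub[OF sg] w by blast
  have "{e \<in> insert {x,w} E. w \<in> e} = {{x,w}}" using nw by auto
  then show "degree (insert {x,w} E) w = 1" unfolding degree_def by simp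
  have nE: "{x,w} \<notin> E" using nw by auto
  have "{e \<in> insert {x,w} E. x \<in> e} = insert {x,w} {e\<in>E. x \<in> e}" by auto
  then show "degree (insert {x,w} E) x = degree E x + 1" unfolding degree_def using fE nE by simp
  assume "y \<noteq> x" "y \<noteq> w"
  then have "{e \<in> insert {x,w} E. y \<in> e} = {e\<in>E. y \<in> e}" by auto
  then show "degree (insert {x,w} E) y = degree E y" unfolding degree_def by simp
qed

lemma attach_mset:
  assumes sg: "simple_graph V E" and x: "x \<in> V" and w: "w \<notin> V"
  shows "\<exists>R. image_mset (degree E) (mset_set V) = add_mset (degree E x) R \<and>
      image_mset (degree (insert {x,w} E)) (mset_set (insert w V)) = add_mset 1 (add_mset (degree E x + 1) R)"
proof -
  have fV: "finite V" using sg unfolding simple_graph_def by simp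
  define R where "R = image_mset (degree E) (mset_set (V - {x}))"
  have V: "V = insert x (V - {x})" using x by auto
  have ms: "mset_set V = add_mset x (mset_set (V - {x}))"
  proof -
    have h: "mset_set (insert x (V - {x})) = add_mset x (mset_set (V - {x}))"
      by (rule mset_set.insert) (auto simp: fV)
    have eq: "insert x (V - {x}) = V" using x by auto
    show ?thesis using h eq by metis
  qed
  have "image_mset (degree (insert {x,w} E)) (mset_set (V - {x})) = R"
    unfolding R_def
  proof (rule image_mset_cong)
    fix y assume "y \<in># mset_set (V - {x})"
    then have "y \<in> V - {x}" using fV by simp
    then show "degree (insert {x,w} E) y = degree E y" using attach_deg(3)[OF sg x w] w by auto
  qed
  moreover have "mset_set (insert w V) = add_mset w (mset_set V)" using fV w by simp
  ultimately show ?thesis using ms attach_deg[OF sg x w] unfolding R_def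
    by (intro exI[of _ R]) (simp add: R_def)
qed



lemma matching_mono: "is_matching E M \<Longrightarrow> E \<subseteq> E' \<Longrightarrow> is_matching E' M"
  unfolding is_matching_def by blast

lemma matching_add:
  assumes sg: "simple_graph V E" and m: "is_matching E M" and u: "u \<notin> V" and w: "w \<notin> V"
    and sub: "insert {u,w} E \<subseteq> E'"
  shows "is_matching E' (insert {u,w} M) \<and> card (insert {u,w} M) = card M + 1"
proof -
  have ME: "M \<subseteq> E" using m unfolding is_matching_def by simp
  have fM: "finite M" using finite_subset[OF ME sg_finite_E[OF sg]] .
  have disj: "\<forall>e\<in>M. {u,w} \<inter> e = {}"
  proof
    fix e assume "e \<in> M"
    then have "e \<subseteq> V" using ME sg_edge_sub[OF sg] by blast
    then show "{u,w} \<inter> e = {}" using u w by blast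
  qed
  have nM: "{u,w} \<notin> M"
  proof
    assume "{u,w} \<in> M"
    then have "{u,w} \<subseteq> V" using ME sg_edge_sub[OF sg] by blast
    then show False using u by simp
  qed
  have "is_matching E' (insert {u,w} M)"
    unfolding is_matching_def
  proof (intro conjI ballI impI)
    show "insert {u,w} M \<subseteq> E'" using sub ME by blast
    fix e f assume e: "e \<in> insert {u,w} M" and f: "f \<in> insert {u,w} M" and ef: "e \<noteq> f"
    show "e \<inter> f = {}"
    proof (cases "e = {u,w}")
      case True
      then have "f \<in> M" using f ef by simp
      then show ?thesis using disj True by simp
    next
      case False
      then have eM: "e \<in> M" using e by simp
      show ?thesis
      proof (cases "f = {u,w}")
        case True then show ?thesis using disj eM by blast
      next
        case False
        then have "f \<in> M" using f by simp
        then show ?thesis using m eM ef unfolding is_matching_def by blast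
      qed
    qed
  qed
  moreover have "card (insert {u,w} M) = card M + 1" using fM nM by simp
  ultimately show ?thesis by simp
qed

lemma mn_ge:
  assumes fE: "finite E" and m: "is_matching E M"
  shows "card M \<le> matching_number E"
proof -
  have "{card M | M. is_matching E M} \<subseteq> card ` Pow E" unfolding is_matching_def by auto
  then have "finite {card M | M. is_matching E M}" using fE finite_subset by blast
  moreover have "card M \<in> {card M | M. is_matching E M}" using m by blast
  ultimately show ?thesis unfolding matching_number_def by (rule Max_ge)
qed

lemma mn_le:
  assumes fE: "finite E" and b: "\<And>M. is_matching E M \<Longrightarrow> card M \<le> b"
  shows "matching_number E \<le> b"
proof -
  have "{card M | M. is_matching E M} \<subseteq> card ` Pow E" unfolding is_matching_def by auto
  then have "finite {card M | M. is_matching E M}" using fE finite_subset by blast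
  moreover have "is_matching E {}" unfolding is_matching_def by simp
  then have "{card M | M. is_matching E M} \<noteq> {}" by blast
  ultimately show ?thesis unfolding matching_number_def
    by (rule Max.boundedI) (use b in blast)
qed

lemma ms_sum_ge: "(\<forall>d\<in>#D. 1 \<le> d) \<Longrightarrow> 2 * size D \<le> sum_mset D + count D 1"
  by (induction D) auto

lemma ms_sum_12: "(\<forall>d\<in>#D. d = 1 \<or> d = 2) \<Longrightarrow>
    sum_mset D = count D 1 + 2 * count D 2 \<and> size D = count D 1 + count D 2"
  by (induction D) auto

lemma ms_sum_no2: "(\<forall>d\<in>#D. 1 \<le> d \<and> d \<noteq> 2) \<Longrightarrow> 3 * size D \<le> sum_mset D + 2 * count D 1"
  by (induction D) auto

lemma fresh_vertex: "finite V \<Longrightarrow> \<exists>w::nat. w \<notin> V"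
  using ex_new_if_finite[OF infinite_UNIV_nat] by blast

lemma tree_finite: "is_tree V E \<Longrightarrow> finite V"
  unfolding is_tree_def simple_graph_def by simp

lemma tree_sg: "is_tree V E \<Longrightarrow> simple_graph V E"
  unfolding is_tree_def by simp

lemma img_mem:
  assumes "finite V" "a \<in># image_mset f (mset_set V)"
  shows "\<exists>x\<in>V. f x = a"
  using assms by auto

lemma step_leaf:
  assumes t: "is_tree V E" and img: "image_mset (degree E) (mset_set V) = add_mset (dx - 1) D0"
    and dx: "2 \<le> dx" and m: "is_matching E M"
  shows "\<exists>V' E' M'. is_tree V' E' \<and> image_mset (degree E') (mset_set V') = add_mset dx (add_mset 1 D0)
     \<and> is_matching E' M' \<and> card M' = card M"
proof -
  have fV: "finite V" using tree_finite[OF t] .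
  have sg: "simple_graph V E" using tree_sg[OF t] .
  obtain x where x: "x \<in> V" "degree E x = dx - 1" using img_mem[OF fV, of "dx - 1" "degree E"] img by auto
  obtain w where w: "w \<notin> V" using fresh_vertex[OF fV] by blast
  obtain R where R: "image_mset (degree E) (mset_set V) = add_mset (degree E x) R"
    "image_mset (degree (insert {x,w} E)) (mset_set (insert w V)) = add_mset 1 (add_mset (degree E x + 1) R)"
    using attach_mset[OF sg x(1) w] by blast
  have "R = D0" using R(1) img x(2) by simp
  then have "image_mset (degree (insert {x,w} E)) (mset_set (insert w V)) = add_mset dx (add_mset 1 D0)"
    using R(2) x(2) dx by (simp add: add_mset_commute)
  moreover have "is_tree (insert w V) (insert {x,w} E)" using attach_tree[OF t x(1) w] .
  moreover have "is_matching (insert {x,w} E) M" using matching_mono[OF m] by blast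
  ultimately show ?thesis by blast
qed

lemma step_P2:
  assumes t: "is_tree V E" and img: "image_mset (degree E) (mset_set V) = add_mset (dx - 1) D0"
    and dx: "2 \<le> dx" and m: "is_matching E M"
  shows "\<exists>V' E' M'. is_tree V' E' \<and> image_mset (degree E') (mset_set V') = add_mset dx (add_mset 2 (add_mset 1 D0))
     \<and> is_matching E' M' \<and> card M' = card M + 1"
proof -
  have fV: "finite V" using tree_finite[OF t] .
  have sg: "simple_graph V E" using tree_sg[OF t] .
  obtain x where x: "x \<in> V" "degree E x = dx - 1" using img_mem[OF fV, of "dx - 1" "degree E"] img by auto
  obtain u where u: "u \<notin> V" using fresh_vertex[OF fV] by blast
  define E1 where "E1 = insert {x,u} E"
  define V1 where "V1 = insert u V"
  obtain R where R: "image_mset (degree E) (mset_set V) = add_mset (degree E x) R"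
    "image_mset (degree E1) (mset_set V1) = add_mset 1 (add_mset (degree E x + 1) R)"
    using attach_mset[OF sg x(1) u] unfolding E1_def V1_def by blast
  have "R = D0" using R(1) img x(2) by simp
  then have img1: "image_mset (degree E1) (mset_set V1) = add_mset 1 (add_mset dx D0)"
    using R(2) x(2) dx by simp
  have t1: "is_tree V1 E1" using attach_tree[OF t x(1) u] unfolding E1_def V1_def .
  have sg1: "simple_graph V1 E1" using tree_sg[OF t1] .
  have fV1: "finite V1" using tree_finite[OF t1] .
  have du: "degree E1 u = 1" using attach_deg(1)[OF sg x(1) u] unfolding E1_def .
  have uV1: "u \<in> V1" unfolding V1_def by simp
  obtain w where w: "w \<notin> V1" using fresh_vertex[OF fV1] by blast
  obtain R1 where R1: "image_mset (degree E1) (mset_set V1) = add_mset (degree E1 u) R1"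
    "image_mset (degree (insert {u,w} E1)) (mset_set (insert w V1)) = add_mset 1 (add_mset (degree E1 u + 1) R1)"
    using attach_mset[OF sg1 uV1 w] by blast
  have "R1 = add_mset dx D0" using R1(1) img1 du by simp
  then have "image_mset (degree (insert {u,w} E1)) (mset_set (insert w V1)) = add_mset dx (add_mset 2 (add_mset 1 D0))"
    using R1(2) du by (simp add: add_mset_commute)
  moreover have "is_tree (insert w V1) (insert {u,w} E1)" using attach_tree[OF t1 uV1 w] .
  moreover have "is_matching (insert {u,w} E1) (insert {u,w} M) \<and> card (insert {u,w} M) = card M + 1"
    using matching_add[OF sg m u, of w "insert {u,w} E1"] w unfolding V1_def E1_def by auto
  ultimately show ?thesis by blast
qed

lemma single_tree: "is_tree {a} {}"
  unfolding is_tree_def simple_graph_def connected_def acyclic_graph_def is_cycle_def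
proof (intro conjI ballI)
  fix u v assume "u \<in> {a}" "v \<in> {a}"
  then show "\<exists>p. is_walk {} p \<and> hd p = u \<and> last p = v" by (intro exI[of _ "[a]"]) simp
next
  show "\<nexists>c. 3 \<le> length c \<and> distinct c \<and> is_walk {} c \<and> adj {} (last c) (hd c)"
    by (simp add: adj_def)
qed auto

lemma arith_a: "(c::nat) \<le> z \<Longrightarrow> min ((z+1) div 2) (max (z+1-c) 1) \<le> m \<Longrightarrow> min ((z+3) div 2) (max (z+3-(c+1)) 1) \<le> m + 1"
  unfolding min_def max_def by (auto split: if_splits; presburger)
lemma arith_c: "(c::nat) \<le> z \<Longrightarrow> 1 \<le> z \<Longrightarrow> z + 4 \<le> 2*c + 2 \<Longrightarrow> min ((z+1) div 2) (max (z+1-c) 1) \<le> m \<Longrightarrow> min ((z+2) div 2) (max (z+2-(c+1)) 1) \<le> m"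
  unfolding min_def max_def by (auto split: if_splits; presburger)
lemma arith_b: "1 \<le> (z::nat) \<Longrightarrow> min ((z+1) div 2) (max (z+1-2) 1) \<le> m \<Longrightarrow> min ((z+3) div 2) (max (z+3-2) 1) \<le> m + 1"
  unfolding min_def max_def by (auto split: if_splits; presburger)

lemma base_K2: "\<exists>V E M. is_tree V E \<and> image_mset (degree E) (mset_set V) = {#1, 1#} \<and> is_matching E M \<and> 1 \<le> card M"
proof -
  have t0: "is_tree {0::nat} {}" by (rule single_tree)
  have sg0: "simple_graph {0::nat} {}" using tree_sg[OF t0] .
  have w: "(1::nat) \<notin> {0}" by simp
  obtain R where R: "image_mset (degree {}) (mset_set {0::nat}) = add_mset (degree {} 0) R"
    "image_mset (degree (insert {0,1} {})) (mset_set (insert 1 {0::nat})) = add_mset 1 (add_mset (degree {} 0 + 1) R)"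
    using attach_mset[OF sg0 _ w, of 0] by blast
  have d0: "degree {} (0::nat) = 0" unfolding degree_def by simp
  have "R = {#}" using R(1) d0 by simp
  then have img: "image_mset (degree (insert {0,1} {})) (mset_set (insert 1 {0::nat})) = {#1,1#}"
    using R(2) d0 by simp
  have t: "is_tree (insert 1 {0::nat}) (insert {0,1} {})" using attach_tree[OF t0 _ w] by simp
  have "is_matching (insert {0::nat,1} {}) {{0,1}}" unfolding is_matching_def by simp
  then show ?thesis using t img by (intro exI conjI) auto
qed

lemma construct:
  "2 \<le> size D \<Longrightarrow> (\<forall>d\<in>#D. 1 \<le> d) \<Longrightarrow> sum_mset D + 2 = 2 * size D \<Longrightarrow>
   \<exists>V E M. is_tree V E \<and> image_mset (degree E) (mset_set V) = D \<and> is_matching E M \<and>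
     min (size D div 2) (max (size D - count D 1) 1) \<le> card M"
proof (induction "size D" arbitrary: D rule: less_induct)
  case less
  have pos: "\<forall>d\<in>#D. 1 \<le> d" and sm: "sum_mset D + 2 = 2 * size D" and s2: "2 \<le> size D"
    using less.prems by auto
  have F1: "2 * size D \<le> sum_mset D + count D 1" using ms_sum_ge[OF pos] .
  have c12: "2 \<le> count D 1" using F1 sm by simp
  have "0 < count D 1" using c12 by linarith
  then have one: "1 \<in># D" by simp
  show ?case
  proof (cases "size D = 2")
    case True
    obtain D1 where D1: "D = add_mset 1 D1" using one by (metis insert_DiffM)
    have "2 \<le> count D1 1 + 1" using c12 D1 by simp
    then have "0 < count D1 1" by linarith
    then have "1 \<in># D1" by simp
    then obtain D2 where D2: "D1 = add_mset 1 D2" by (metis insert_DiffM)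
    have "D2 = {#}" using True D1 D2 by simp
    then have "D = {#1,1#}" using D1 D2 by simp
    then show ?thesis using base_K2 True by auto
  next
    case False
    then have n3: "3 \<le> size D" using s2 by simp
    show ?thesis
    proof (cases "\<exists>dx\<in>#D. 3 \<le> dx")
      case True
      then obtain dx where dx: "dx \<in># D" "3 \<le> dx" by blast
      obtain D1 where D1: "D = add_mset dx D1" using dx(1) by (metis insert_DiffM)
      show ?thesis
      proof (cases "2 \<in># D")
        case True
        then have "2 \<in># D1" using D1 dx(2) by auto
        then obtain D2 where D2: "D1 = add_mset 2 D2" by (metis insert_DiffM)
        have "1 \<in># D2" using one D1 D2 dx(2) by auto
        then obtain D0 where D0: "D2 = add_mset 1 D0" by (metis insert_DiffM)
        have De: "D = add_mset dx (add_mset 2 (add_mset 1 D0))" using D1 D2 D0 by simp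
        define D' where "D' = add_mset (dx - 1) D0"
        have e1: "dx + sum_mset D0 + 5 = 2 * size D0 + 6" using sm De by simp
        have sD0: "1 \<le> size D0" using e1 dx(2) by linarith
        have h1: "size D' < size D" "2 \<le> size D'" using De sD0 unfolding D'_def by auto
        have h2: "\<forall>d\<in>#D'. 1 \<le> d" using pos De dx(2) unfolding D'_def by auto
        have h3: "sum_mset D' + 2 = 2 * size D'" using e1 dx(2) unfolding D'_def by simp
        obtain V E M where T: "is_tree V E" "image_mset (degree E) (mset_set V) = D'" "is_matching E M"
          "min (size D' div 2) (max (size D' - count D' 1) 1) \<le> card M"
          using less.hyps[OF h1 h2 h3] by blast
        obtain V2 E2 M2 where T2: "is_tree V2 E2" "image_mset (degree E2) (mset_set V2) = D"
          "is_matching E2 M2" "card M2 = card M + 1"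
          using step_P2[OF T(1) T(2)[unfolded D'_def] _ T(3)] dx(2) De by auto
        have cD': "count D' 1 = count D0 1" "size D' = size D0 + 1" using dx(2) unfolding D'_def by auto
        have cD: "count D 1 = count D0 1 + 1" "size D = size D0 + 3" using De dx(2) by auto
        have "min (size D div 2) (max (size D - count D 1) 1) \<le> card M + 1"
          using arith_a[OF count_le_size[of D0 1], of "card M"] T(4) cD cD' by simp
        then have "min (size D div 2) (max (size D - count D 1) 1) \<le> card M2" using T2(4) by simp
        then show ?thesis using T2(1,2,3) by blast
      next
        case False
        have "1 \<in># D1" using one D1 dx(2) by auto
        then obtain D0 where D0: "D1 = add_mset 1 D0" by (metis insert_DiffM)
        have De: "D = add_mset dx (add_mset 1 D0)" using D1 D0 by simp
        define D' where "D' = add_mset (dx - 1) D0"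
        have no2: "\<forall>d\<in>#D. 1 \<le> d \<and> d \<noteq> 2" using pos False by auto
        have F3: "3 * size D \<le> sum_mset D + 2 * count D 1" using ms_sum_no2[OF no2] .
        have cD: "count D 1 = count D0 1 + 1" "size D = size D0 + 2" using De dx(2) by auto
        have cD': "count D' 1 = count D0 1" "size D' = size D0 + 1" using dx(2) unfolding D'_def by auto
        have e1: "dx + sum_mset D0 + 3 = 2 * size D0 + 4" using sm De by simp
        have sD0: "1 \<le> size D0" using n3 cD by linarith
        have h1: "size D' < size D" "2 \<le> size D'" using cD cD' sD0 by auto
        have h2: "\<forall>d\<in>#D'. 1 \<le> d" using pos De dx(2) unfolding D'_def by auto
        have h3: "sum_mset D' + 2 = 2 * size D'" using e1 dx(2) unfolding D'_def by simp
        obtain V E M where T: "is_tree V E" "image_mset (degree E) (mset_set V) = D'" "is_matching E M"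
          "min (size D' div 2) (max (size D' - count D' 1) 1) \<le> card M"
          using less.hyps[OF h1 h2 h3] by blast
        obtain V2 E2 M2 where T2: "is_tree V2 E2" "image_mset (degree E2) (mset_set V2) = D"
          "is_matching E2 M2" "card M2 = card M"
          using step_leaf[OF T(1) T(2)[unfolded D'_def] _ T(3)] dx(2) De by auto
        have k: "size D0 + 4 \<le> 2 * count D0 1 + 2" using F3 sm cD by linarith
        have "min (size D div 2) (max (size D - count D 1) 1) \<le> card M"
          using arith_c[OF count_le_size[of D0 1] sD0 k, of "card M"] T(4) cD cD' by simp
        then have "min (size D div 2) (max (size D - count D 1) 1) \<le> card M2" using T2(4) by simp
        then show ?thesis using T2(1,2,3) by blast
      qed
    next
      case False
      then have p12: "\<forall>d\<in>#D. d = 1 \<or> d = 2" using pos by force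
      have S12: "sum_mset D = count D 1 + 2 * count D 2" "size D = count D 1 + count D 2"
        using ms_sum_12[OF p12] by auto
      have c1: "count D 1 = 2" using S12 sm by linarith
      have c2: "1 \<le> count D 2" using S12 c1 n3 by linarith
      then have "0 < count D 2" by linarith
      then have two: "2 \<in># D" by simp
      obtain D1 where D1: "D = add_mset 2 D1" using two by (metis insert_DiffM)
      show ?thesis
      proof (cases "2 \<le> count D 2")
        case True
        then have "0 < count D1 2" using D1 by simp
        then have "2 \<in># D1" by simp
        then obtain D2 where D2: "D1 = add_mset 2 D2" by (metis insert_DiffM)
        have "1 \<in># D2" using one D1 D2 by auto
        then obtain D0 where D0: "D2 = add_mset 1 D0" by (metis insert_DiffM)
        have De: "D = add_mset 2 (add_mset 2 (add_mset 1 D0))" using D1 D2 D0 by simp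
        define D' where "D' = add_mset 1 D0"
        have cD: "count D 1 = count D0 1 + 1" "size D = size D0 + 3" using De by auto
        have c0: "count D0 1 = 1" using cD c1 by simp
        have sD0: "1 \<le> size D0" using c0 count_le_size[of D0 1] by simp
        have e1: "sum_mset D0 + 5 + 2 = 2 * size D0 + 6" using sm De by simp
        have h1: "size D' < size D" "2 \<le> size D'" using cD sD0 unfolding D'_def by auto
        have h2: "\<forall>d\<in>#D'. 1 \<le> d" using pos De unfolding D'_def by auto
        have h3: "sum_mset D' + 2 = 2 * size D'" using e1 unfolding D'_def by simp
        obtain V E M where T: "is_tree V E" "image_mset (degree E) (mset_set V) = D'" "is_matching E M"
          "min (size D' div 2) (max (size D' - count D' 1) 1) \<le> card M"
          using less.hyps[OF h1 h2 h3] by blast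
        have T2': "image_mset (degree E) (mset_set V) = add_mset (2 - 1) D0" using T(2) unfolding D'_def by simp
        obtain V2 E2 M2 where T2: "is_tree V2 E2" "image_mset (degree E2) (mset_set V2) = D"
          "is_matching E2 M2" "card M2 = card M + 1"
          using step_P2[OF T(1) T2' _ T(3)] De by auto
        have cD': "count D' 1 = 2" "size D' = size D0 + 1" using c0 unfolding D'_def by auto
        have "min (size D div 2) (max (size D - count D 1) 1) \<le> card M + 1"
          using arith_b[OF sD0, of "card M"] T(4) cD cD' c1 by simp
        then have "min (size D div 2) (max (size D - count D 1) 1) \<le> card M2" using T2(4) by simp
        then show ?thesis using T2(1,2,3) by blast
      next
        case False
        have c2': "count D 2 = 1" using c2 False by linarith
        then have n3': "size D = 3" using S12 c1 by simp
        have "1 \<in># D1" using one D1 by auto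
        then obtain D0 where D0: "D1 = add_mset 1 D0" by (metis insert_DiffM)
        have De: "D = add_mset 2 (add_mset 1 D0)" using D1 D0 by simp
        define D' where "D' = add_mset 1 D0"
        have sD0: "size D0 = 1" using n3' De by simp
        have c0: "count D0 1 = 1" using c1 De by simp
        have e1: "sum_mset D0 + 3 + 2 = 6" using sm De n3' by simp
        have h1: "size D' < size D" "2 \<le> size D'" using De sD0 unfolding D'_def by auto
        have h2: "\<forall>d\<in>#D'. 1 \<le> d" using pos De unfolding D'_def by auto
        have h3: "sum_mset D' + 2 = 2 * size D'" using e1 sD0 unfolding D'_def by simp
        obtain V E M where T: "is_tree V E" "image_mset (degree E) (mset_set V) = D'" "is_matching E M"
          "min (size D' div 2) (max (size D' - count D' 1) 1) \<le> card M"
          using less.hyps[OF h1 h2 h3] by blast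
        have T2': "image_mset (degree E) (mset_set V) = add_mset (2 - 1) D0" using T(2) unfolding D'_def by simp
        obtain V2 E2 M2 where T2: "is_tree V2 E2" "image_mset (degree E2) (mset_set V2) = D"
          "is_matching E2 M2" "card M2 = card M"
          using step_leaf[OF T(1) T2' _ T(3)] De by auto
        have "size D' = 2" "count D' 1 = 2" using sD0 c0 unfolding D'_def by auto
        then have "1 \<le> card M" using T(4) by simp
        then have "min (size D div 2) (max (size D - count D 1) 1) \<le> card M" using n3' c1 by simp
        then have "min (size D div 2) (max (size D - count D 1) 1) \<le> card M2" using T2(4) by simp
        then show ?thesis using T2(1,2,3) by blast
      qed
    qed
  qed
qed

lemma count_img: "finite V \<Longrightarrow> count (image_mset f (mset_set V)) a = card {v\<in>V. f v = a}"
proof (induction V rule: finite_induct)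
  case empty then show ?case by simp
next
  case (insert x F)
  have "{v \<in> insert x F. f v = a} = (if f x = a then insert x {v\<in>F. f v = a} else {v\<in>F. f v = a})" by auto
  then show ?case using insert by simp
qed

lemma upper_half:
  assumes t: "is_tree V E" and m: "is_matching E M"
  shows "card M \<le> card V div 2"
proof -
  have sg: "simple_graph V E" using tree_sg[OF t] .
  have fV: "finite V" using tree_finite[OF t] .
  have ME: "M \<subseteq> E" using m unfolding is_matching_def by simp
  have fM: "finite M" using finite_subset[OF ME sg_finite_E[OF sg]] .
  have pw: "pairwise disjnt M" using m unfolding is_matching_def pairwise_def disjnt_def by blast
  have fin: "\<And>A. A \<in> M \<Longrightarrow> finite A" using ME sg_edge_sub[OF sg] fV finite_subset by blast
  have "card (\<Union>M) = sum card M" using card_Union_disjoint[OF pw fin] by simp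
  also have "\<dots> = sum (\<lambda>_. 2) M"
  proof (rule sum.cong)
    fix e assume "e \<in> M"
    then obtain a b where "e = {a,b}" "a \<noteq> b" using ME sg_edge[OF sg] by blast
    then show "card e = 2" by simp
  qed simp
  finally have "card (\<Union>M) = 2 * card M" by simp
  moreover have "\<Union>M \<subseteq> V" using ME sg_edge_sub[OF sg] by blast
  then have "card (\<Union>M) \<le> card V" using card_mono[OF fV] by blast
  ultimately show ?thesis by simp
qed

lemma upper_nonleaf:
  assumes t: "is_tree V E" and c: "3 \<le> card V" and m: "is_matching E M"
  shows "card M \<le> card V - card {v\<in>V. degree E v = 1}"
proof -
  have sg: "simple_graph V E" using tree_sg[OF t] .
  have fV: "finite V" using tree_finite[OF t] .
  have ME: "M \<subseteq> E" using m unfolding is_matching_def by simp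
  define g where "g = (\<lambda>e. SOME v. v \<in> e \<and> degree E v \<noteq> 1)"
  have gP: "g e \<in> e \<and> degree E (g e) \<noteq> 1" if e: "e \<in> M" for e
  proof -
    obtain a b where ab: "e = {a,b}" "a \<noteq> b" using ME e sg_edge[OF sg] by blast
    have "\<exists>v. v \<in> e \<and> degree E v \<noteq> 1"
    proof (rule ccontr)
      assume "\<not> ?thesis"
      then have "degree E a = 1" "degree E b = 1" using ab by auto
      then show False using tree_no_leaf_edge[OF t c, of a b] e ME ab by auto
    qed
    then show ?thesis unfolding g_def by (rule someI_ex)
  qed
  have inj: "inj_on g M"
  proof (rule inj_onI)
    fix e f assume e: "e \<in> M" and f: "f \<in> M" and gef: "g e = g f"
    show "e = f"
    proof (rule ccontr)
      assume "e \<noteq> f"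
      then have "e \<inter> f = {}" using m e f unfolding is_matching_def by blast
      moreover have "g e \<in> e" "g e \<in> f" using gP[OF e] gP[OF f] gef by auto
      ultimately show False by blast
    qed
  qed
  have img: "g ` M \<subseteq> {v\<in>V. degree E v \<noteq> 1}"
  proof
    fix v assume "v \<in> g ` M"
    then obtain e where e: "e \<in> M" "v = g e" by blast
    then have "v \<in> e" "degree E v \<noteq> 1" using gP by auto
    moreover have "e \<subseteq> V" using e(1) ME sg_edge_sub[OF sg] by blast
    ultimately show "v \<in> {v\<in>V. degree E v \<noteq> 1}" by blast
  qed
  have "card M \<le> card {v\<in>V. degree E v \<noteq> 1}"
    using card_inj_on_le[OF inj img] fV by simp
  moreover have "{v\<in>V. degree E v \<noteq> 1} = V - {v\<in>V. degree E v = 1}" by auto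
  then have "card {v\<in>V. degree E v \<noteq> 1} = card V - card {v\<in>V. degree E v = 1}"
    using fV by (simp add: card_Diff_subset)
  ultimately show ?thesis by simp
qed

lemma mset_sls: "finite V \<Longrightarrow> mset (sorted_list_of_set V) = mset_set V"
  by (metis mset_sorted_list_of_multiset sorted_list_of_mset_set)

lemma sort_eq_of_mset: "mset xs = mset ys \<Longrightarrow> sort xs = sort ys"
  by (metis properties_for_sort mset_sort sorted_sort)

lemma key:
  assumes t: "is_tree V E" and ds: "degree_sequence V E = d"
  shows "card V = length d \<and> card {v\<in>V. degree E v = 1} = count_list d 1
     \<and> image_mset (degree E) (mset_set V) = mset d"
proof -
  have fV: "finite V" using tree_finite[OF t] .
  have md: "mset d = image_mset (degree E) (mset_set V)"
    using ds[unfolded degree_sequence_def, symmetric] fV by (simp add: mset_sls)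
  have "length d = card V" using ds[unfolded degree_sequence_def, symmetric] fV by simp
  moreover have "count_list d 1 = card {v\<in>V. degree E v = 1}"
  proof -
    have "count_list d 1 = count (mset d) 1" by (simp add: count_mset)
    also have "\<dots> = count (image_mset (degree E) (mset_set V)) 1" using md by simp
    also have "\<dots> = card {v\<in>V. degree E v = 1}" by (rule count_img[OF fV])
    finally show ?thesis .
  qed
  ultimately show ?thesis using md by simp
qed


theorem lemma1:
  fixes d :: "nat list"
  assumes "tree_degree_sequence d" and "length d \<ge> 3"
  shows "nu_T_max d = min (length d div 2) (length d - count_list d 1)"
proof -
  obtain V0 E0 where T0: "is_tree V0 E0" "degree_sequence V0 E0 = d"
    using assms(1) unfolding tree_degree_sequence_def by blast
  define n where "n = length d"
  define c1 where "c1 = count_list d 1"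
  define tgt where "tgt = min (n div 2) (n - c1)"
  have K0: "card V0 = n" "image_mset (degree E0) (mset_set V0) = mset d"
    using key[OF T0] unfolding n_def by auto
  have fV0: "finite V0" using tree_finite[OF T0(1)] .
  have n3: "3 \<le> n" using assms(2) unfolding n_def .
  have pos: "\<forall>x\<in>#mset d. 1 \<le> x"
  proof
    fix x assume "x \<in># mset d"
    then have "x \<in># image_mset (degree E0) (mset_set V0)" using K0 by simp
    from img_mem[OF fV0 this] obtain v where v: "v \<in> V0" "degree E0 v = x" by blast
    have "2 \<le> card V0" using K0(1) n3 by simp
    then have "1 \<le> degree E0 v" using tree_deg_pos[OF T0(1) v(1)] by simp
    then show "1 \<le> x" using v(2) by simp
  qed
  have "sum_mset (mset d) = sum (degree E0) V0" using K0 by (simp add: sum_unfold_sum_mset)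
  also have "\<dots> = 2 * card E0" using handshake[OF tree_sg[OF T0(1)]] .
  finally have sm: "sum_mset (mset d) + 2 = 2 * size (mset d)"
    using tree_card[OF T0(1)] K0 unfolding n_def by simp
  have sz: "2 \<le> size (mset d)" using n3 unfolding n_def by simp
  obtain V E M where C: "is_tree V E" "image_mset (degree E) (mset_set V) = mset d" "is_matching E M"
    "min (size (mset d) div 2) (max (size (mset d) - count (mset d) 1) 1) \<le> card M"
    using construct[OF sz pos sm] by blast
  have fV: "finite V" using tree_finite[OF C(1)] .
  have "sort (map (degree E) (sorted_list_of_set V)) = sort (map (degree E0) (sorted_list_of_set V0))"
    by (rule sort_eq_of_mset) (simp add: mset_sls fV fV0 C(2) K0(2))
  then have dsE: "degree_sequence V E = d" using T0(2) unfolding degree_sequence_def by simp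
  define S where "S = {matching_number E | V E. is_tree V E \<and> degree_sequence V E = d}"
  have inS: "matching_number E \<in> S" unfolding S_def using C(1) dsE by blast
  have bound: "\<forall>x\<in>S. x \<le> tgt"
  proof
    fix x assume "x \<in> S"
    then obtain V' E' where T': "is_tree V' E'" "degree_sequence V' E' = d" "x = matching_number E'"
      unfolding S_def by blast
    have K': "card V' = n" "card {v\<in>V'. degree E' v = 1} = c1"
      using key[OF T'(1,2)] unfolding n_def c1_def by auto
    have "matching_number E' \<le> tgt"
    proof (rule mn_le)
      show "finite E'" using sg_finite_E[OF tree_sg[OF T'(1)]] .
      fix M' assume mM: "is_matching E' M'"
      have c3: "3 \<le> card V'" using K'(1) n3 by simp
      have "card M' \<le> card V' div 2" using upper_half[OF T'(1) mM] .
      moreover have "card M' \<le> card V' - card {v\<in>V'. degree E' v = 1}" using upper_nonleaf[OF T'(1) c3 mM] .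
      ultimately show "card M' \<le> tgt" using K' unfolding tgt_def by simp
    qed
    then show "x \<le> tgt" using T'(3) by simp
  qed
  have fS: "finite S" using bound by (meson finite_nat_set_iff_bounded_le)
  have "card M \<le> matching_number E" using mn_ge[OF sg_finite_E[OF tree_sg[OF C(1)]] C(3)] .
  moreover have "tgt \<le> card M" using C(4) unfolding tgt_def n_def c1_def by (simp add: count_mset)
  ultimately have "tgt \<le> Max S" using Max_ge[OF fS inS] by linarith
  moreover have "Max S \<le> tgt" using fS inS bound by (intro Max.boundedI) auto
  ultimately have "Max S = tgt" by simp
  then show ?thesis unfolding nu_T_max_def S_def tgt_def n_def c1_def by simp
qed

end
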